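(* (1) Every ideal of $C(X)_\mathcal{P}$ has depth zero if and only if $(X,\tau,\mathcal{P})$ is a $\mathcal{P}P$-space. (2) Every essential ideal of $C(X)_\mathcal{P}$ has depth zero if and only if $(X,\tau,\mathcal{P})$ is an almost $\mathcal{P}P$-space.
   Context: Let $(X,\tau)$ be a $T_1$ topological space and $\mathcal{P}$ an ideal of closed subsets of $X$ (a nonempty family of closed sets closed under finite unions and under taking closed subsets). For $f\colon X\to\mathbb{R}$, $D_f$ denotes the set of points of discontinuity of $f$, and $C(X)_\mathcal{P}=\{f\colon X\to\mathbb{R} : \overline{D_f}\in\mathcal{P}\}$, a commutative ring with unity under pointwise operations. For $f\in C(X)_\mathcal{P}$, $Z_\mathcal{P}(f)=\{x: f(x)=0\}$, $coz(f)=X\setminus Z_\mathcal{P}(f)$; $X_\mathcal{P}$ is $X$ with the topology having base $\{coz(f)\}$ and $int_{X_\mathcal{P}}$ its interior. $(X,\tau,\mathcal{P})$ is a $\mathcal{P}P$-space if $C(X)_\mathcal{P}$ is von Neumann regular, and an almost $\mathcal{P}P$-space if $Z_\mathcal{P}(f)\ne\emptyset$ implies $int_{X_\mathcal{P}}Z_\mathcal{P}(f)\neq\emptyset$ for $f\in C(X)_\mathcal{P}$. For an ideal $I$ regarded as a $C(X)_\mathcal{P}$-module $M$, an element $a$ is $M$-regular if $am\neq 0$ for all $m\in M\setminus\{0\}$; a sequence $a_1,\dots,a_n$ is $I$-regular if $a_1$ is $I$-regular, each $a_k$ is $I/(a_1I+\dots+a_{k-1}I)$-regular, and $a_1I+\dots+a_nI\neq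 I$; the depth of $I$ is the length of a maximal $I$-regular sequence. An ideal is essential if it intersects every nonzero ideal nontrivially. *)

theory Defs
  imports "HOL-Analysis.Analysis"
begin

text \<open>Real-valued functions on X are modelled as functions 'a => real that vanish
  outside topspace X (so that each function on X has a unique representative).\<close>

definition closed_ideal :: "'a topology \<Rightarrow> 'a set set \<Rightarrow> bool" where
  "closed_ideal X P \<longleftrightarrow> P \<noteq> {} \<and> (\<forall>A\<in>P. closedin X A)
     \<and> (\<forall>A\<in>P. \<forall>B\<in>P. A \<union> B \<in> P)
     \<and> (\<forall>A\<in>P. \<forall>B. closedin X B \<and> B \<subseteq> A \<longrightarrow> B \<in> P)"

definition discont :: "'a topology \<Rightarrow> ('a \<Rightarrow> real) \<Rightarrow> 'a set" where
  "discont X f = {x \<in> topspace X. \<not> limitin euclideanreal f (f x) (atin X x)}"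

definition CXP :: "'a topology \<Rightarrow> 'a set set \<Rightarrow> ('a \<Rightarrow> real) set" where
  "CXP X P = {f. (\<forall>x. x \<notin> topspace X \<longrightarrow> f x = 0) \<and> X closure_of (discont X f) \<in> P}"

definition ZP :: "'a topology \<Rightarrow> ('a \<Rightarrow> real) \<Rightarrow> 'a set" where
  "ZP X f = {x \<in> topspace X. f x = 0}"

definition coz :: "'a topology \<Rightarrow> ('a \<Rightarrow> real) \<Rightarrow> 'a set" where
  "coz X f = topspace X - ZP X f"

definition XP :: "'a topology \<Rightarrow> 'a set set \<Rightarrow> 'a topology" where
  "XP X P = topology_generated_by {coz X f | f. f \<in> CXP X P}"

definition ring_ideal :: "('a \<Rightarrow> real) set \<Rightarrow> ('a \<Rightarrow> real) set \<Rightarrow> bool" where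
  "ring_ideal R I \<longleftrightarrow> I \<subseteq> R \<and> (\<lambda>x. 0) \<in> I
     \<and> (\<forall>f\<in>I. \<forall>g\<in>I. (\<lambda>x. f x + g x) \<in> I)
     \<and> (\<forall>f\<in>I. (\<lambda>x. - f x) \<in> I)
     \<and> (\<forall>r\<in>R. \<forall>f\<in>I. (\<lambda>x. r x * f x) \<in> I)"

definition essential_ideal :: "('a \<Rightarrow> real) set \<Rightarrow> ('a \<Rightarrow> real) set \<Rightarrow> bool" where
  "essential_ideal R I \<longleftrightarrow> ring_ideal R I \<and>
     (\<forall>J. ring_ideal R J \<and> J \<noteq> {\<lambda>x. 0} \<longrightarrow> I \<inter> J \<noteq> {\<lambda>x. 0})"

definition seq_submod :: "('a \<Rightarrow> real) set \<Rightarrow> ('a \<Rightarrow> real) list \<Rightarrow> ('a \<Rightarrow> real) set" where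
  "seq_submod I as = {(\<lambda>x. \<Sum>i<length as. (as ! i) x * (ms ! i) x) | ms.
      length ms = length as \<and> set ms \<subseteq> I}"

definition module_regular :: "('a \<Rightarrow> real) set \<Rightarrow> ('a \<Rightarrow> real) set \<Rightarrow> ('a \<Rightarrow> real) \<Rightarrow> bool" where
  "module_regular I N a \<longleftrightarrow> (\<forall>m\<in>I. m \<notin> N \<longrightarrow> (\<lambda>x. a x * m x) \<notin> N)"

definition regular_seq :: "('a \<Rightarrow> real) set \<Rightarrow> ('a \<Rightarrow> real) set \<Rightarrow> ('a \<Rightarrow> real) list \<Rightarrow> bool" where
  "regular_seq R I as \<longleftrightarrow> set as \<subseteq> R
     \<and> (\<forall>k<length as. module_regular I (seq_submod I (take k as)) (as ! k))
     \<and> seq_submod I as \<noteq> I"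

text \<open>Depth zero: a maximal I-regular sequence has length 0, i.e. no nonempty I-regular sequence.\<close>
definition depth_zero :: "('a \<Rightarrow> real) set \<Rightarrow> ('a \<Rightarrow> real) set \<Rightarrow> bool" where
  "depth_zero R I \<longleftrightarrow> (\<forall>as. regular_seq R I as \<longrightarrow> as = [])"

definition PP_space :: "'a topology \<Rightarrow> 'a set set \<Rightarrow> bool" where
  "PP_space X P \<longleftrightarrow> (\<forall>f\<in>CXP X P. \<exists>g\<in>CXP X P. \<forall>x. f x = f x * g x * f x)"

definition almost_PP_space :: "'a topology \<Rightarrow> 'a set set \<Rightarrow> bool" where
  "almost_PP_space X P \<longleftrightarrow> (\<forall>f\<in>CXP X P. ZP X f \<noteq> {} \<longrightarrow> (XP X P) interior_of (ZP X f) \<noteq> {})"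

end

theory Submission
  imports Defs
begin


lemma ci_un: "closed_ideal X P \<Longrightarrow> A \<in> P \<Longrightarrow> B \<in> P \<Longrightarrow> A \<union> B \<in> P"
  unfolding closed_ideal_def by (elim conjE) (drule bspec, assumption, drule bspec, assumption)

lemma ci_sub: "closed_ideal X P \<Longrightarrow> A \<in> P \<Longrightarrow> closedin X B \<Longrightarrow> B \<subseteq> A \<Longrightarrow> B \<in> P"
  unfolding closed_ideal_def by (elim conjE) (drule bspec, assumption, drule spec, erule mp, rule conjI)

lemma P_sub:
  assumes cp: "closed_ideal X P" and D: "D \<subseteq> D1 \<union> D2"
    and h1: "X closure_of D1 \<in> P" and h2: "X closure_of D2 \<in> P"
  shows "X closure_of D \<in> P"
proof -
  have u: "X closure_of D1 \<union> X closure_of D2 \<in> P" using ci_un[OF cp h1 h2] .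
  have "X closure_of D \<subseteq> X closure_of (D1 \<union> D2)" using closure_of_mono[OF D] .
  also have "\<dots> = X closure_of D1 \<union> X closure_of D2" by (rule closure_of_Un)
  finally show ?thesis using ci_sub[OF cp u closedin_closure_of] by simp
qed

lemma empty_P: "closed_ideal X P \<Longrightarrow> {} \<in> P"
proof -
  assume cp: "closed_ideal X P"
  then obtain A where "A \<in> P" unfolding closed_ideal_def by auto
  then show ?thesis using ci_sub[OF cp] by auto
qed

lemma discont_mult: "discont X (\<lambda>x. f x * g x) \<subseteq> discont X f \<union> discont X g"
  unfolding discont_def by (auto intro: tendsto_mult)

lemma discont_add: "discont X (\<lambda>x. f x + g x) \<subseteq> discont X f \<union> discont X g"
  unfolding discont_def by (auto intro: tendsto_add)

lemma discont_minus: "discont X (\<lambda>x. - f x) \<subseteq> discont X f \<union> discont X f"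
  unfolding discont_def by (auto intro: tendsto_minus)

lemma CXP_mult: "closed_ideal X P \<Longrightarrow> f \<in> CXP X P \<Longrightarrow> g \<in> CXP X P \<Longrightarrow> (\<lambda>x. f x * g x) \<in> CXP X P"
  unfolding CXP_def using P_sub[OF _ discont_mult] by auto
lemma CXP_add: "closed_ideal X P \<Longrightarrow> f \<in> CXP X P \<Longrightarrow> g \<in> CXP X P \<Longrightarrow> (\<lambda>x. f x + g x) \<in> CXP X P"
  unfolding CXP_def using P_sub[OF _ discont_add] by auto
lemma CXP_minus: "closed_ideal X P \<Longrightarrow> f \<in> CXP X P \<Longrightarrow> (\<lambda>x. - f x) \<in> CXP X P"
  unfolding CXP_def using P_sub[OF _ discont_minus] by auto

lemma CXP_zero: "closed_ideal X P \<Longrightarrow> (\<lambda>x. 0) \<in> CXP X P"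
  unfolding CXP_def discont_def using empty_P by auto

definition one where "one X = (\<lambda>x. if x \<in> topspace X then 1 else (0::real))"

lemma ev_top: "x \<in> topspace X \<Longrightarrow> eventually (\<lambda>y. y \<in> topspace X) (atin X x)"
  unfolding eventually_atin using openin_subset by blast

lemma CXP_one: "closed_ideal X P \<Longrightarrow> one X \<in> CXP X P"
proof -
  assume cp: "closed_ideal X P"
  have "discont X (one X) = {}"
  proof -
    { fix x assume x: "x \<in> topspace X"
      have "eventually (\<lambda>y. one X y = one X x) (atin X x)"
        using ev_top[OF x] x by (auto simp: one_def elim: eventually_mono)
      hence "((one X) \<longlongrightarrow> one X x) (atin X x)" by (rule tendsto_eventually)
    } thus ?thesis unfolding discont_def by auto
  qed
  thus ?thesis using cp empty_P unfolding CXP_def one_def by auto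
qed

lemma CXP_inv:
  assumes cp: "closed_ideal X P" and a: "a \<in> CXP X P" and nz: "\<forall>x\<in>topspace X. a x \<noteq> 0"
  shows "(\<lambda>x. if x \<in> topspace X then inverse (a x) else 0) \<in> CXP X P"
proof -
  let ?b = "\<lambda>x. if x \<in> topspace X then inverse (a x) else 0"
  have "discont X ?b \<subseteq> discont X a \<union> discont X a"
  proof
    fix x assume "x \<in> discont X ?b"
    hence x: "x \<in> topspace X" and nl: "\<not> (?b \<longlongrightarrow> ?b x) (atin X x)" unfolding discont_def by auto
    show "x \<in> discont X a \<union> discont X a"
    proof (rule ccontr)
      assume "x \<notin> discont X a \<union> discont X a"
      hence "(a \<longlongrightarrow> a x) (atin X x)" using x unfolding discont_def by auto
      hence "((\<lambda>y. inverse (a y)) \<longlongrightarrow> inverse (a x)) (atin X x)"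
        using nz x by (intro tendsto_inverse) auto
      moreover have "eventually (\<lambda>y. inverse (a y) = ?b y) (atin X x)"
        using ev_top[OF x] by (auto elim: eventually_mono)
      ultimately have "(?b \<longlongrightarrow> inverse (a x)) (atin X x)" by (rule Lim_transform_eventually)
      thus False using nl x by simp
    qed
  qed
  moreover have "X closure_of discont X a \<in> P" using a unfolding CXP_def by auto
  ultimately have "X closure_of discont X ?b \<in> P" using P_sub[OF cp] by blast
  thus ?thesis unfolding CXP_def by auto
qed


lemma ri_sub: "ring_ideal R I \<Longrightarrow> I \<subseteq> R" unfolding ring_ideal_def by (elim conjE)
lemma ri_zero: "ring_ideal R I \<Longrightarrow> (\<lambda>x. 0) \<in> I" unfolding ring_ideal_def by (elim conjE)
lemma ri_add: "ring_ideal R I \<Longrightarrow> f \<in> I \<Longrightarrow> g \<in> I \<Longrightarrow> (\<lambda>x. f x + g x) \<in> I"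
  unfolding ring_ideal_def by (elim conjE) (drule bspec, assumption, drule bspec, assumption)
lemma ri_neg: "ring_ideal R I \<Longrightarrow> f \<in> I \<Longrightarrow> (\<lambda>x. - f x) \<in> I"
  unfolding ring_ideal_def by (elim conjE) (drule bspec, assumption)
lemma ri_mult: "ring_ideal R I \<Longrightarrow> r \<in> R \<Longrightarrow> f \<in> I \<Longrightarrow> (\<lambda>x. r x * f x) \<in> I"
  unfolding ring_ideal_def by (elim conjE) (drule bspec, assumption, drule bspec, assumption)

lemma submod_nil: "seq_submod I [] = {\<lambda>x. 0}"
  unfolding seq_submod_def by auto

lemma sum_in:
  fixes n :: nat
  assumes ri: "ring_ideal R I" shows "(\<forall>i<n. (\<lambda>x. g i x) \<in> I) \<Longrightarrow> (\<lambda>x. \<Sum>i<n. g i x) \<in> I"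
proof (induction n)
  case 0 then show ?case using ri_zero[OF ri] by simp
next
  case (Suc n)
  then have "(\<lambda>x. \<Sum>i<n. g i x) \<in> I" "(\<lambda>x. g n x) \<in> I" by auto
  then have "(\<lambda>x. (\<Sum>i<n. g i x) + g n x) \<in> I" using ri_add[OF ri] by blast
  then show ?case by simp
qed

lemma submod_sub:
  assumes ri: "ring_ideal R I" and as: "set as \<subseteq> R"
  shows "seq_submod I as \<subseteq> I"
proof
  fix h assume "h \<in> seq_submod I as"
  then obtain ms where h: "h = (\<lambda>x. \<Sum>i<length as. (as ! i) x * (ms ! i) x)"
    and l: "length ms = length as" and ms: "set ms \<subseteq> I" unfolding seq_submod_def by auto
  have "\<forall>i<length as. (\<lambda>x. (as ! i) x * (ms ! i) x) \<in> I"
  proof (intro allI impI)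
    fix i assume i: "i < length as"
    then have "as ! i \<in> R" "ms ! i \<in> I" using as ms l nth_mem by (metis subsetD)+
    then show "(\<lambda>x. (as ! i) x * (ms ! i) x) \<in> I" using ri_mult[OF ri] by blast
  qed
  then show "h \<in> I" using sum_in[OF ri, of "length as" "\<lambda>i x. (as ! i) x * (ms ! i) x"] h by simp
qed

lemma submod_sup:
  assumes ri: "ring_ideal R I" and ne: "as \<noteq> []"
    and H: "\<forall>m\<in>I. \<exists>n\<in>I. m = (\<lambda>x. (as ! 0) x * n x)"
  shows "I \<subseteq> seq_submod I as"
proof
  fix m assume "m \<in> I"
  then obtain n where n: "n \<in> I" and mn: "m = (\<lambda>x. (as ! 0) x * n x)" using H by blast
  obtain k where k: "length as = Suc k" using ne by (cases as) auto
  define ms where "ms = n # replicate k (\<lambda>x. 0::real)"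
  have z: "(\<lambda>x. 0) \<in> I" using ri_zero[OF ri] .
  have "length ms = length as" "set ms \<subseteq> I" using k n z unfolding ms_def by auto
  moreover have "m = (\<lambda>x. \<Sum>i<length as. (as ! i) x * (ms ! i) x)"
    unfolding k sum.lessThan_Suc_shift mn by (auto simp: ms_def)
  ultimately show "m \<in> seq_submod I as" unfolding seq_submod_def by blast
qed

lemma depth_zero_iff:
  assumes ri: "ring_ideal R I"
  shows "depth_zero R I \<longleftrightarrow> (\<forall>a\<in>R. module_regular I {\<lambda>x. 0} a \<longrightarrow> (\<forall>m\<in>I. \<exists>n\<in>I. m = (\<lambda>x. a x * n x)))"
proof
  assume dz: "depth_zero R I"
  show "\<forall>a\<in>R. module_regular I {\<lambda>x. 0} a \<longrightarrow> (\<forall>m\<in>I. \<exists>n\<in>I. m = (\<lambda>x. a x * n x))"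
  proof (intro ballI impI, rule ccontr)
    fix a m assume a: "a \<in> R" and mr: "module_regular I {\<lambda>x. 0} a" and m: "m \<in> I"
      and nx: "\<not> (\<exists>n\<in>I. m = (\<lambda>x. a x * n x))"
    have "m \<notin> seq_submod I [a]"
    proof
      assume "m \<in> seq_submod I [a]"
      then obtain ms where "m = (\<lambda>x. \<Sum>i<length [a]. ([a] ! i) x * (ms ! i) x)"
        and l: "length ms = 1" and ms: "set ms \<subseteq> I" unfolding seq_submod_def by auto
      then have "m = (\<lambda>x. a x * (ms ! 0) x)" "ms ! 0 \<in> I" by auto
      then show False using nx by blast
    qed
    then have "regular_seq R I [a]" using a mr m unfolding regular_seq_def by (auto simp: submod_nil)
    then show False using dz unfolding depth_zero_def by blast
  qed
next
  assume H: "\<forall>a\<in>R. module_regular I {\<lambda>x. 0} a \<longrightarrow> (\<forall>m\<in>I. \<exists>n\<in>I. m = (\<lambda>x. a x * n x))"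
  show "depth_zero R I" unfolding depth_zero_def
  proof (intro allI impI, rule ccontr)
    fix as assume rs: "regular_seq R I as" and ne: "as \<noteq> []"
    then have sR: "set as \<subseteq> R" and ne2: "seq_submod I as \<noteq> I"
      and mr: "module_regular I (seq_submod I (take 0 as)) (as ! 0)"
      unfolding regular_seq_def by auto
    have "as ! 0 \<in> R" using sR ne by (simp add: subset_code(1))
    then have "\<forall>m\<in>I. \<exists>n\<in>I. m = (\<lambda>x. (as ! 0) x * n x)" using H mr by (simp add: submod_nil)
    then have "I \<subseteq> seq_submod I as" using submod_sup[OF ri ne] by blast
    then show False using submod_sub[OF ri sR] ne2 by blast
  qed
qed


lemma CXP_out: "f \<in> CXP X P \<Longrightarrow> x \<notin> topspace X \<Longrightarrow> f x = 0"
  unfolding CXP_def by auto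

lemma principal_ideal:
  assumes cp: "closed_ideal X P" and f: "f \<in> CXP X P"
  shows "ring_ideal (CXP X P) {(\<lambda>x. r x * f x) | r. r \<in> CXP X P}"
  unfolding ring_ideal_def
proof (intro conjI ballI)
  let ?R = "CXP X P"
  show "{(\<lambda>x. r x * f x) | r. r \<in> ?R} \<subseteq> ?R" using CXP_mult[OF cp _ f] by auto
  show "(\<lambda>x. 0) \<in> {(\<lambda>x. r x * f x) | r. r \<in> ?R}"
    using CXP_zero[OF cp] by (intro CollectI exI[of _ "\<lambda>x. 0"]) auto
  fix g assume "g \<in> {(\<lambda>x. r x * f x) | r. r \<in> ?R}"
  then obtain r where r: "r \<in> ?R" and g: "g = (\<lambda>x. r x * f x)" by blast
  show "(\<lambda>x. - g x) \<in> {(\<lambda>x. r x * f x) | r. r \<in> ?R}"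
    using CXP_minus[OF cp r] g by (intro CollectI exI[of _ "\<lambda>x. - r x"]) auto
  { fix h assume "h \<in> {(\<lambda>x. r x * f x) | r. r \<in> ?R}"
    then obtain s where s: "s \<in> ?R" and h: "h = (\<lambda>x. s x * f x)" by blast
    show "(\<lambda>x. g x + h x) \<in> {(\<lambda>x. r x * f x) | r. r \<in> ?R}"
      using CXP_add[OF cp r s] g h by (intro CollectI exI[of _ "\<lambda>x. r x + s x"]) (auto simp: algebra_simps) }
  { fix q assume q: "q \<in> ?R"
    show "(\<lambda>x. q x * g x) \<in> {(\<lambda>x. r x * f x) | r. r \<in> ?R}"
      using CXP_mult[OF cp q r] g by (intro CollectI exI[of _ "\<lambda>x. q x * r x"]) (auto simp: algebra_simps) }
qed

lemma R_ideal: "closed_ideal X P \<Longrightarrow> ring_ideal (CXP X P) (CXP X P)"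
  unfolding ring_ideal_def using CXP_zero CXP_add CXP_minus CXP_mult by blast

lemma gen_coz:
  assumes cp: "closed_ideal X P"
  shows "generate_topology_on {coz X f | f. f \<in> CXP X P} U \<Longrightarrow> y \<in> U \<Longrightarrow> \<exists>h\<in>CXP X P. y \<in> coz X h \<and> coz X h \<subseteq> U"
proof (induction arbitrary: y rule: generate_topology_on.induct)
  case Empty then show ?case by simp
next
  case (Int a b)
  then obtain h1 h2 where h1: "h1 \<in> CXP X P" "y \<in> coz X h1" "coz X h1 \<subseteq> a"
    and h2: "h2 \<in> CXP X P" "y \<in> coz X h2" "coz X h2 \<subseteq> b" by (meson IntE)
  have "coz X (\<lambda>x. h1 x * h2 x) = coz X h1 \<inter> coz X h2" unfolding coz_def ZP_def by auto
  then show ?case using h1 h2 CXP_mult[OF cp h1(1) h2(1)] by (intro bexI[of _ "\<lambda>x. h1 x * h2 x"]) auto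
next
  case (UN K) then show ?case by blast
next
  case (Basis s) then show ?case by blast
qed

theorem theorem4p5:
  fixes X :: "'a topology" and P :: "'a set set"
  assumes "t1_space X" and "closed_ideal X P"
  shows "((\<forall>I. ring_ideal (CXP X P) I \<longrightarrow> depth_zero (CXP X P) I) \<longleftrightarrow> PP_space X P)
       \<and> ((\<forall>I. essential_ideal (CXP X P) I \<longrightarrow> depth_zero (CXP X P) I) \<longleftrightarrow> almost_PP_space X P)"
proof (intro conjI iffI)
  note cp = assms(2)
  let ?R = "CXP X P"
  show "PP_space X P" if H: "\<forall>I. ring_ideal ?R I \<longrightarrow> depth_zero ?R I"
    unfolding PP_space_def
  proof
    fix f assume f: "f \<in> ?R"
    let ?I = "{(\<lambda>x. r x * f x) | r. r \<in> ?R}"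
    have ri: "ring_ideal ?R ?I" by (rule principal_ideal[OF cp f])
    have mr: "module_regular ?I {\<lambda>x. 0} f" unfolding module_regular_def
    proof (intro ballI impI)
      fix m assume "m \<in> ?I" and m0: "m \<notin> {\<lambda>x. 0}"
      then obtain r where m: "m = (\<lambda>x. r x * f x)" by blast
      show "(\<lambda>x. f x * m x) \<notin> {\<lambda>x. 0}"
      proof
        assume "(\<lambda>x. f x * m x) \<in> {\<lambda>x. 0}"
        then have "\<forall>x. f x * (r x * f x) = 0" unfolding m by (metis singletonD)
        then have "\<forall>x. r x * f x = 0" by (metis mult_eq_0_iff)
        then show False using m0 m by auto
      qed
    qed
    have "one X \<in> ?R" by (rule CXP_one[OF cp])
    then have "(\<lambda>x. one X x * f x) \<in> ?I" by blast
    then obtain n where n: "n \<in> ?I" and e: "(\<lambda>x. one X x * f x) = (\<lambda>x. f x * n x)"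
      using depth_zero_iff[OF ri] H ri f mr by blast
    then obtain r where r: "r \<in> ?R" and nr: "n = (\<lambda>x. r x * f x)" by blast
    have "\<forall>x. f x = f x * r x * f x"
    proof
      fix x
      have "one X x * f x = f x * n x" using e by metis
      moreover have "one X x * f x = f x" using CXP_out[OF f] by (auto simp: one_def)
      ultimately have "f x = f x * n x" by simp
      also have "\<dots> = f x * r x * f x" using nr by (simp add: mult.assoc)
      finally show "f x = f x * r x * f x" .
    qed
    then show "\<exists>g\<in>?R. \<forall>x. f x = f x * g x * f x" using r by (intro bexI[where x=r])
  qed
next
  note cp = assms(2)
  let ?R = "CXP X P"
  assume pp: "PP_space X P"
  show "\<forall>I. ring_ideal ?R I \<longrightarrow> depth_zero ?R I"
  proof (intro allI impI)
    fix I assume ri: "ring_ideal ?R I"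
    have IR: "I \<subseteq> ?R" using ri_sub[OF ri] .
    show "depth_zero ?R I" unfolding depth_zero_iff[OF ri]
    proof (intro ballI impI)
      fix a m assume a: "a \<in> ?R" and mr: "module_regular I {\<lambda>x. 0} a" and m: "m \<in> I"
      obtain g where g: "g \<in> ?R" and ag: "\<forall>x. a x = a x * g x * a x" using pp a unfolding PP_space_def by blast
      have gm: "(\<lambda>x. g x * m x) \<in> I" using ri_mult[OF ri g m] .
      have agm: "(\<lambda>x. a x * (g x * m x)) \<in> I" using ri_mult[OF ri a gm] .
      have "(\<lambda>x. - (a x * (g x * m x))) \<in> I" using ri_neg[OF ri agm] .
      then have m': "(\<lambda>x. m x + - (a x * (g x * m x))) \<in> I" using ri_add[OF ri m] by blast
      have "(\<lambda>x. a x * (m x + - (a x * (g x * m x)))) = (\<lambda>x. 0)"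
      proof
        fix x have "a x * (a x * (g x * m x)) = (a x * g x * a x) * m x" by (simp add: mult_ac)
        also have "\<dots> = a x * m x" using ag by metis
        finally show "a x * (m x + - (a x * (g x * m x))) = 0" by (simp add: algebra_simps)
      qed
      then have z0: "(\<lambda>x. m x + - (a x * (g x * m x))) = (\<lambda>x. 0)" using mr m' unfolding module_regular_def by auto
      have "m = (\<lambda>x. a x * (g x * m x))"
      proof (rule ext)
        fix x have "m x + - (a x * (g x * m x)) = 0" using fun_cong[OF z0, of x] by simp
        then show "m x = a x * (g x * m x)" by linarith
      qed
      then show "\<exists>n\<in>I. m = (\<lambda>x. a x * n x)" using gm by (intro bexI[where x="\<lambda>x. g x * m x"])
    qed
  qed
next
  note cp = assms(2)
  let ?R = "CXP X P"
  assume H: "\<forall>I. essential_ideal ?R I \<longrightarrow> depth_zero ?R I"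
  have ess: "essential_ideal ?R ?R" unfolding essential_ideal_def
  proof (intro conjI allI impI)
    show "ring_ideal ?R ?R" by (rule R_ideal[OF cp])
    fix J assume "ring_ideal ?R J \<and> J \<noteq> {\<lambda>x. 0}"
    then have "J \<subseteq> ?R" "J \<noteq> {\<lambda>x. 0}" using ri_sub by auto
    then show "?R \<inter> J \<noteq> {\<lambda>x. 0}" by (simp add: Int_absorb1)
  qed
  then have dz: "depth_zero ?R ?R" using H by blast
  show "almost_PP_space X P" unfolding almost_PP_space_def
  proof (intro ballI impI, rule ccontr)
    fix f assume f: "f \<in> ?R" and zne: "ZP X f \<noteq> {}" and int: "\<not> XP X P interior_of ZP X f \<noteq> {}"
    have mr: "module_regular ?R {\<lambda>x. 0} f" unfolding module_regular_def
    proof (intro ballI impI)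
      fix m assume m: "m \<in> ?R" and m0: "m \<notin> {\<lambda>x. 0}"
      show "(\<lambda>x. f x * m x) \<notin> {\<lambda>x. 0}"
      proof
        assume "(\<lambda>x. f x * m x) \<in> {\<lambda>x. 0}"
        then have fm: "\<forall>x. f x * m x = 0" by (metis singletonD)
        have "openin (XP X P) (coz X m)" unfolding XP_def openin_topology_generated_by_iff
          using m by (intro generate_topology_on.Basis) blast
        moreover have "coz X m \<subseteq> ZP X f" using fm unfolding coz_def ZP_def by auto
        ultimately have "coz X m \<subseteq> {}" using int interior_of_maximal by metis
        then have "\<forall>x. m x = 0" using CXP_out[OF m] unfolding coz_def ZP_def by blast
        then show False using m0 by auto
      qed
    qed
    have "one X \<in> ?R" by (rule CXP_one[OF cp])
    moreover have "\<forall>m\<in>?R. \<exists>n\<in>?R. m = (\<lambda>x. f x * n x)"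
      using depth_zero_iff[OF R_ideal[OF cp]] dz f mr by blast
    ultimately obtain n where e: "one X = (\<lambda>x. f x * n x)" by blast
    obtain x0 where x0: "x0 \<in> ZP X f" using zne by blast
    have "one X x0 = f x0 * n x0" using fun_cong[OF e, of x0] by simp
    then show False using x0 unfolding ZP_def one_def by simp
  qed
next
  note cp = assms(2)
  let ?R = "CXP X P"
  assume apl: "almost_PP_space X P"
  show "\<forall>I. essential_ideal ?R I \<longrightarrow> depth_zero ?R I"
  proof (intro allI impI)
    fix I assume es: "essential_ideal ?R I"
    then have ri: "ring_ideal ?R I" unfolding essential_ideal_def by (elim conjE)
    show "depth_zero ?R I" unfolding depth_zero_iff[OF ri]
    proof (intro ballI impI)
      fix a m assume a: "a \<in> ?R" and mr: "module_regular I {\<lambda>x. 0} a" and m: "m \<in> I"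
      have nz: "\<forall>x\<in>topspace X. a x \<noteq> 0"
      proof (rule ccontr)
        assume "\<not> (\<forall>x\<in>topspace X. a x \<noteq> 0)"
        then have "ZP X a \<noteq> {}" unfolding ZP_def by auto
        then obtain y where y: "y \<in> XP X P interior_of ZP X a" using apl a unfolding almost_PP_space_def by blast
        have "openin (XP X P) (XP X P interior_of ZP X a)" by simp
        then have gt: "generate_topology_on {coz X f | f. f \<in> ?R} (XP X P interior_of ZP X a)"
          unfolding XP_def openin_topology_generated_by_iff .
        obtain h where h: "h \<in> ?R" "y \<in> coz X h" "coz X h \<subseteq> XP X P interior_of ZP X a"
          using gen_coz[OF cp gt y] by (elim bexE conjE)
        have hz: "coz X h \<subseteq> ZP X a" using subset_trans[OF h(3) interior_of_subset] .
        let ?J = "{(\<lambda>x. r x * h x) | r. r \<in> ?R}"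
        have rj: "ring_ideal ?R ?J" by (rule principal_ideal[OF cp h(1)])
        have "(\<lambda>x. one X x * h x) \<in> ?J" using CXP_one[OF cp] by blast
        moreover have "(\<lambda>x. one X x * h x) = h" using CXP_out[OF h(1)] by (auto simp: one_def)
        ultimately have "h \<in> ?J" by simp
        moreover have "h \<noteq> (\<lambda>x. 0)" using h(2) unfolding coz_def ZP_def by auto
        ultimately have "?J \<noteq> {\<lambda>x. 0}" by blast
        then have "I \<inter> ?J \<noteq> {\<lambda>x. 0}" using es rj unfolding essential_ideal_def by (elim conjE) blast
        moreover have "(\<lambda>x. 0) \<in> I \<inter> ?J" using ri_zero[OF ri] ri_zero[OF rj] by blast
        ultimately obtain k where k: "k \<in> I" "k \<in> ?J" "k \<noteq> (\<lambda>x. 0)" by blast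
        then obtain r where kr: "k = (\<lambda>x. r x * h x)" by blast
        have "(\<lambda>x. a x * k x) = (\<lambda>x. 0)"
        proof
          fix x show "a x * k x = 0"
          proof (cases "h x = 0")
            case False
            then have "x \<in> topspace X" using CXP_out[OF h(1)] by blast
            then have "x \<in> ZP X a" using hz False unfolding coz_def ZP_def by blast
            then show ?thesis unfolding ZP_def by simp
          qed (simp add: kr)
        qed
        then show False using mr k unfolding module_regular_def by auto
      qed
      let ?b = "\<lambda>x. if x \<in> topspace X then inverse (a x) else 0"
      have b: "?b \<in> ?R" by (rule CXP_inv[OF cp a nz])
      have bm: "(\<lambda>x. ?b x * m x) \<in> I" using ri_mult[OF ri b m] .
      have IR: "m \<in> ?R" using ri_sub[OF ri] m by blast
      have "m = (\<lambda>x. a x * (?b x * m x))"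
      proof
        fix x show "m x = a x * (?b x * m x)"
          using nz CXP_out[OF IR] by (cases "x \<in> topspace X") auto
      qed
      then show "\<exists>n\<in>I. m = (\<lambda>x. a x * n x)" using bm by (intro bexI[where x="\<lambda>x. ?b x * m x"])
    qed
  qed
qed

end
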